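(* Under the standing assumptions below, let $e,f\in S_1$ with $ef=f$. Then $\|\theta(e)-\theta(f)\|_{HS}\le5\delta$.
   Context: Standing assumptions: $S$ is a semilattice (commutative semigroup of idempotents), $0\le\delta<0.03$, and $\theta:S\to M_2(\mathbb C)$ satisfies $\|\theta(e)\theta(f)-\theta(ef)\|_{HS}\le\delta$ for all $e,f\in S$, where $\|A\|_{HS}=(\operatorname{tr}(A^*A))^{1/2}$. For $k\in\{0,1,2\}$, $S_k=\{x\in S:\ |\operatorname{tr}\theta(x)-k|<0.95\}$; these sets are pairwise disjoint and cover $S$. *)

theory Defs
  imports "HOL-Analysis.Analysis"
begin

definition mtrace :: "complex^2^2 \<Rightarrow> complex" where
  "mtrace A = (\<Sum>i\<in>UNIV. A $ i $ i)"

text \<open>Hilbert--Schmidt (Frobenius) norm: (tr(A^* A))^(1/2) = sqrt of sum of |a_ij|^2.\<close>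
definition hs_norm :: "complex^2^2 \<Rightarrow> real" where
  "hs_norm A = sqrt (\<Sum>i\<in>UNIV. \<Sum>j\<in>UNIV. (cmod (A $ i $ j))\<^sup>2)"

definition Sk :: "('a \<Rightarrow> complex^2^2) \<Rightarrow> nat \<Rightarrow> 'a set" where
  "Sk \<theta> k = {x. cmod (mtrace (\<theta> x) - of_nat k) < 0.95}"

end

theory Submission
  imports Defs
begin

lemma ab_le: "(a::real) * b \<le> (a\<^sup>2 + b\<^sup>2) / 2"
proof -
  have "0 \<le> (a - b)\<^sup>2" by simp
  thus ?thesis by (simp add: power2_eq_square algebra_simps)
qed

lemma sum_sq_le: "((a::real) + b)\<^sup>2 \<le> 2 * (a\<^sup>2 + b\<^sup>2)"
proof -
  have "0 \<le> (a - b)\<^sup>2" by simp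
  thus ?thesis by (simp add: power2_eq_square algebra_simps)
qed

lemma hs_eq_norm: "hs_norm A = norm A"
proof -
  have "\<And>i. (norm (A $ i))\<^sup>2 = (\<Sum>j\<in>UNIV. (cmod (A $ i $ j))\<^sup>2)"
    by (simp add: norm_vec_def L2_set_def sum_nonneg)
  then show ?thesis by (simp add: hs_norm_def norm_vec_def L2_set_def)
qed

lemma hs_ent: "hs_norm A = sqrt ((cmod (A$1$1))\<^sup>2 + (cmod (A$1$2))\<^sup>2 + (cmod (A$2$1))\<^sup>2 + (cmod (A$2$2))\<^sup>2)"
  by (simp add: hs_norm_def sum_2 add.assoc)

lemma tr_ent: "mtrace A = A$1$1 + A$2$2"
  by (simp add: mtrace_def sum_2)

lemma mult_ent: "((A::complex^2^2) ** B) $ i $ j = A$i$1 * B$1$j + A$i$2 * B$2$j"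
  by (simp add: matrix_matrix_mult_def sum_2)

definition det2 :: "complex^2^2 \<Rightarrow> complex" where
  "det2 A = A$1$1 * A$2$2 - A$1$2 * A$2$1"

lemma hs_sq: "(hs_norm A)\<^sup>2 = (cmod (A$1$1))\<^sup>2 + (cmod (A$1$2))\<^sup>2 + (cmod (A$2$1))\<^sup>2 + (cmod (A$2$2))\<^sup>2"
  by (simp add: hs_ent)

lemma tr_bound: "cmod (mtrace X) \<le> 1.5 * hs_norm X"
proof -
  have "cmod (mtrace X) \<le> cmod (X$1$1) + cmod (X$2$2)" by (simp add: tr_ent norm_triangle_ineq)
  moreover have "(cmod (X$1$1) + cmod (X$2$2))\<^sup>2 \<le> (1.5 * hs_norm X)\<^sup>2"
  proof -
    have "(cmod (X$1$1) + cmod (X$2$2))\<^sup>2 \<le> 2 * ((cmod (X$1$1))\<^sup>2 + (cmod (X$2$2))\<^sup>2)"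
      by (rule sum_sq_le)
    also have "\<dots> \<le> 2 * (hs_norm X)\<^sup>2" unfolding hs_sq by simp
    also have "\<dots> \<le> (1.5 * hs_norm X)\<^sup>2" by (simp add: power2_eq_square)
    finally show ?thesis .
  qed
  then have "cmod (X$1$1) + cmod (X$2$2) \<le> 1.5 * hs_norm X"
    by (rule power2_le_imp_le) (simp add: hs_eq_norm)
  ultimately show ?thesis using hs_sq[of X] by argo
qed

lemma det_bound: "cmod (det2 X) \<le> (hs_norm X)\<^sup>2 / 2"
proof -
  have "cmod (det2 X) \<le> cmod (X$1$1) * cmod (X$2$2) + cmod (X$1$2) * cmod (X$2$1)"
    unfolding det2_def using norm_triangle_ineq4[of "X$1$1*X$2$2" "X$1$2*X$2$1"] by (simp add: norm_mult)
  also have "\<dots> \<le> (hs_norm X)\<^sup>2 / 2"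
  proof -
    from ab_le[of "cmod (X$1$1)" "cmod (X$2$2)"] ab_le[of "cmod (X$1$2)" "cmod (X$2$1)"]
    show ?thesis using hs_sq[of X] by argo
  qed
  finally show ?thesis .
qed

lemma disc_bound: "cmod ((mtrace X)\<^sup>2 - 4 * det2 X) \<le> 2 * (hs_norm X)\<^sup>2"
proof -
  have eq: "(mtrace X)\<^sup>2 - 4 * det2 X = (X$1$1 - X$2$2)\<^sup>2 + 4 * (X$1$2 * X$2$1)"
    unfolding tr_ent det2_def by algebra
  have "cmod ((X$1$1 - X$2$2)\<^sup>2 + 4 * (X$1$2 * X$2$1)) \<le> (cmod (X$1$1 - X$2$2))\<^sup>2 + 4 * (cmod (X$1$2) * cmod (X$2$1))"
    using norm_triangle_ineq[of "(X$1$1 - X$2$2)\<^sup>2" "4 * (X$1$2 * X$2$1)"] by (simp add: norm_mult norm_power)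
  also have "\<dots> \<le> ((cmod (X$1$1)) + cmod (X$2$2))\<^sup>2 + 4 * (cmod (X$1$2) * cmod (X$2$1))"
    by (simp add: norm_triangle_ineq4 power_mono)
  also have "\<dots> \<le> 2 * (hs_norm X)\<^sup>2"
  proof -
    show ?thesis
      using sum_sq_le[of "cmod (X$1$1)" "cmod (X$2$2)"] ab_le[of "cmod (X$1$2)" "cmod (X$2$1)"] hs_sq[of X] by argo
  qed
  finally show ?thesis using eq by simp
qed


lemma hs_tri: "hs_norm (A + B) \<le> hs_norm A + hs_norm B"
  unfolding hs_eq_norm by (rule norm_triangle_ineq)

lemma hs_tri_diff: "hs_norm (A - B) \<le> hs_norm A + hs_norm B"
  unfolding hs_eq_norm by (rule norm_triangle_ineq4)

lemma hs_nonneg: "0 \<le> hs_norm A"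
  unfolding hs_eq_norm by simp

lemma hs_scale: "hs_norm (\<chi> i j. c * A$i$j) = cmod c * hs_norm A"
proof -
  have "(hs_norm (\<chi> i j. c * A$i$j))\<^sup>2 = (cmod c * hs_norm A)\<^sup>2"
    unfolding hs_sq[of "\<chi> i j. c * A$i$j"] power_mult_distrib hs_sq[of A] by (simp add: norm_mult power_mult_distrib algebra_simps)
  then show ?thesis using hs_nonneg[of A] hs_nonneg[of "\<chi> i j. c * A$i$j"]
    by (simp add: power2_eq_iff_nonneg)
qed

lemma hs_diag: "hs_norm ((\<chi> i j. if i = j then c else 0)::complex^2^2) \<le> 1.5 * cmod c"
proof -
  have "(hs_norm ((\<chi> i j. if i = j then c else 0)::complex^2^2))\<^sup>2 = 2 * (cmod c)\<^sup>2"
    unfolding hs_sq by simp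
  also have "\<dots> \<le> (1.5 * cmod c)\<^sup>2" by (simp add: power2_eq_square)
  finally show ?thesis by (rule power2_le_imp_le) simp
qed

lemma P2: "mtrace (A ** A - A) = (mtrace A)\<^sup>2 - mtrace A - 2 * det2 A"
  unfolding tr_ent det2_def by (simp add: mult_ent) algebra

lemma P3: "det2 (A ** A - A) = det2 A * (det2 A - mtrace A + 1)"
  unfolding tr_ent det2_def by (simp add: mult_ent) algebra

lemma P1: "(mtrace A - 1)\<^sup>2 = (mtrace A - 1)^4 - 2 * (mtrace A - 1)\<^sup>2 * mtrace (A ** A - A)
   + ((mtrace (A ** A - A))\<^sup>2 - 4 * det2 (A ** A - A))"
  unfolding P2 P3 by algebra

lemma P4: "(\<chi> i j. (mtrace A - 1) * A$i$j) = (A ** A - A) + (\<chi> i j. if i = j then det2 A else 0)"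
  unfolding tr_ent det2_def
  by (simp add: vec_eq_iff forall_2 mult_ent) algebra


lemma scalarA:
  fixes r a b \<delta> :: real
  assumes r0: "0 \<le> r" and r1: "r < 0.95" and h: "r\<^sup>2 \<le> r^4 + 2 * r\<^sup>2 * a + b"
    and a0: "0 \<le> a" and a1: "a \<le> 1.5 * \<delta>" and b1: "b \<le> 2 * \<delta>\<^sup>2"
    and d0: "0 \<le> \<delta>" and d1: "\<delta> < 0.03"
  shows "r \<le> 1.5 * \<delta>"
proof -
  define s where "s = r\<^sup>2"
  have s0: "0 \<le> s" unfolding s_def by simp
  have "r * r < 0.95 * 0.95" using r0 r1 by (intro mult_strict_mono) auto
  then have s1: "s < 0.9025" unfolding s_def by (simp add: power2_eq_square)
  have h': "s \<le> s * s + 2 * (s * a) + b" using h unfolding s_def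
    by (simp add: power2_eq_square power4_eq_xxxx mult.assoc)
  have sa: "s * a \<le> s * (1.5 * \<delta>)" using a1 s0 by (intro mult_left_mono) auto
  have sd: "s * \<delta> \<le> s * 0.03" using d1 s0 by (intro mult_left_mono) auto
  have "2 * (s * a) \<le> 2 * (s * (1.5 * \<delta>))" using sa by (rule mult_left_mono) simp
  also have "\<dots> = 3 * (s * \<delta>)" by simp
  also have "\<dots> \<le> 3 * (s * 0.03)" using sd by (rule mult_left_mono) simp
  also have "\<dots> = 9/100 * s" by simp
  finally have sa2: "2 * (s * a) \<le> 9/100 * s" .
  have "\<delta> * \<delta> \<le> 0.03 * 0.03" using d0 d1 by (intro mult_mono) auto
  then have "b \<le> 18/10000" using b1 by (simp add: power2_eq_square)
  note bb = this
  have s1': "s \<le> 9025/10000" using s1 by simp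
  have small: "s < 1/100"
  proof (rule ccontr)
    assume "\<not> s < 1/100"
    then have "0 \<le> (s - 1/100) * (9025/10000 - s)" using s1' by simp
    moreover have "(s - 1/100) * (9025/10000 - s) = 9125/10000 * s - s * s - 9025/1000000"
      by (simp add: field_simps)
    ultimately have "s * s \<le> 9125/10000 * s - 9025/1000000" by linarith
    then show False using h' sa2 bb s1' by linarith
  qed
  have "s * s \<le> 1/100 * s" using small s0 by (intro mult_right_mono) auto
  then have "9/10 * s \<le> b" using h' sa2 by linarith
  then have "9/10 * s \<le> 2 * \<delta>\<^sup>2" using b1 by linarith
  moreover have "(1.5 * \<delta>)\<^sup>2 = 9/4 * \<delta>\<^sup>2" by (simp add: power2_eq_square)
  moreover have "0 \<le> \<delta>\<^sup>2" by simp
  ultimately have "r\<^sup>2 \<le> (1.5 * \<delta>)\<^sup>2" unfolding s_def by linarith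
  then show ?thesis by (rule power2_le_imp_le) (use d0 in simp)
qed

lemma scalarB:
  fixes t \<tau> d \<xi> :: complex and \<delta> :: real
  assumes t1: "cmod t \<le> 3 * \<delta>" and tau1: "cmod \<tau> \<le> 6 * \<delta>"
    and tau: "\<tau> = t\<^sup>2 - t - 2 * d" and xi: "\<xi> = d * (d - t + 1)"
    and xi1: "cmod \<xi> \<le> 8 * \<delta>\<^sup>2" and d0: "0 \<le> \<delta>" and d1: "\<delta> < 0.03"
  shows "cmod d \<le> 0.32 * \<delta>" "cmod (t - 1) \<ge> 0.91"
proof -
  have tt: "cmod t \<le> 0.09" using t1 d1 by linarith
  have tsq: "cmod (t\<^sup>2) \<le> 0.0081"
  proof -
    have "cmod (t\<^sup>2) = cmod t * cmod t" by (simp add: power2_eq_square norm_mult)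
    also have "\<dots> \<le> 0.09 * 0.09" by (rule mult_mono[OF tt tt]) auto
    finally show ?thesis by simp
  qed
  have "2 * d = t\<^sup>2 - t - \<tau>" using tau by simp
  then have "2 * cmod d = cmod (t\<^sup>2 - t - \<tau>)" by (metis norm_mult norm_numeral)
  moreover have "cmod (t\<^sup>2 - t - \<tau>) \<le> cmod (t\<^sup>2 - t) + cmod \<tau>" by (rule norm_triangle_ineq4)
  moreover have "cmod (t\<^sup>2 - t) \<le> cmod (t\<^sup>2) + cmod t" by (rule norm_triangle_ineq4)
  ultimately have "2 * cmod d \<le> cmod (t\<^sup>2) + cmod t + cmod \<tau>" by linarith
  moreover have "cmod (t\<^sup>2) \<le> 81/10000" using tsq by simp
  moreover have tt': "cmod t \<le> 9/100" using tt by simp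
  moreover have "\<delta> \<le> 3/100" using d1 by simp
  ultimately have dsm: "cmod d \<le> 14/100" using tau1 by linarith
  have "cmod (d - t + 1) \<ge> 1 - cmod d - cmod t"
  proof -
    have "1 = cmod ((d - t + 1) - d + t)" by simp
    also have "\<dots> \<le> cmod ((d - t + 1) - d) + cmod t" by (rule norm_triangle_ineq)
    also have "\<dots> \<le> cmod (d - t + 1) + cmod d + cmod t" using norm_triangle_ineq4[of "d - t + 1" d] by linarith
    finally show ?thesis by linarith
  qed
  then have "cmod (d - t + 1) \<ge> 77/100" using dsm tt' by linarith
  then have g: "cmod (d - t + 1) \<ge> 0.77" by simp
  have "cmod d * 0.77 \<le> cmod d * cmod (d - t + 1)" using g by (intro mult_left_mono) auto
  also have "\<dots> = cmod \<xi>" using xi by (simp add: norm_mult)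
  also have "\<dots> \<le> 8 * \<delta>\<^sup>2" by (rule xi1)
  also have "\<dots> = \<delta> * (8 * \<delta>)" by (simp add: power2_eq_square)
  also have "\<dots> \<le> \<delta> * 0.24" using d0 d1 by (intro mult_left_mono) auto
  also have "\<dots> = 0.24 * \<delta>" by simp
  finally have "cmod d * 0.77 \<le> 0.24 * \<delta>" .
  then have "cmod d * 77 \<le> 24 * \<delta>" by simp
  then have "cmod d \<le> 32/100 * \<delta>" using d0 by linarith
  then show "cmod d \<le> 0.32 * \<delta>" by simp
  have "cmod (t - (t - 1)) \<le> cmod t + cmod (t - 1)" by (rule norm_triangle_ineq4)
  then have "1 \<le> cmod (t - 1) + cmod t" by simp
  then have "cmod (t - 1) \<ge> 91/100" using tt' by linarith
  then show "cmod (t - 1) \<ge> 0.91" by simp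
qed


lemma trace_near:
  fixes A :: "complex^2^2"
  assumes hX: "hs_norm (A ** A - A) \<le> \<delta>" and ht: "cmod (mtrace A - 1) < 0.95"
    and d0: "0 \<le> \<delta>" and d1: "\<delta> < 0.03"
  shows "cmod (mtrace A - 1) \<le> 1.5 * \<delta>"
proof -
  define u where "u = mtrace A - 1"
  define X where "X = A ** A - A"
  define \<eta> where "\<eta> = (mtrace X)\<^sup>2 - 4 * det2 X"
  have eq: "u\<^sup>2 = u^4 - 2 * u\<^sup>2 * mtrace X + \<eta>" unfolding u_def X_def \<eta>_def by (rule P1)
  have "cmod (u\<^sup>2) = cmod (u^4 - 2 * u\<^sup>2 * mtrace X + \<eta>)" by (rule arg_cong[OF eq])
  also have "\<dots> \<le> cmod (u^4 - 2 * u\<^sup>2 * mtrace X) + cmod \<eta>" by (rule norm_triangle_ineq)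
  also have "\<dots> \<le> cmod (u^4) + cmod (2 * u\<^sup>2 * mtrace X) + cmod \<eta>"
    using norm_triangle_ineq4[of "u^4" "2 * u\<^sup>2 * mtrace X"] by linarith
  finally have h: "(cmod u)\<^sup>2 \<le> (cmod u)^4 + 2 * (cmod u)\<^sup>2 * cmod (mtrace X) + cmod \<eta>"
    by (simp add: norm_mult norm_power)
  have a1: "cmod (mtrace X) \<le> 1.5 * \<delta>" using tr_bound[of X] hX unfolding X_def by linarith
  have "(hs_norm X)\<^sup>2 \<le> \<delta>\<^sup>2" using hX hs_nonneg[of X] unfolding X_def by (intro power_mono) auto
  then have b1: "cmod \<eta> \<le> 2 * \<delta>\<^sup>2" using disc_bound[of X] unfolding \<eta>_def by linarith
  show ?thesis unfolding u_def[symmetric]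
    by (rule scalarA[OF _ _ h _ a1 b1 d0 d1]) (use ht u_def in auto)
qed

theorem lemmal:
  fixes \<theta> :: "'a::ab_semigroup_mult \<Rightarrow> complex^2^2"
    and \<delta> :: real and e f :: 'a
  assumes idem: "\<And>x::'a. x * x = x"
    and delta_nonneg: "0 \<le> \<delta>" and delta_small: "\<delta> < 0.03"
    and approx: "\<And>x y. hs_norm (\<theta> x ** \<theta> y - \<theta> (x * y)) \<le> \<delta>"
    and e_in: "e \<in> Sk \<theta> 1" and f_in: "f \<in> Sk \<theta> 1"
    and ef: "e * f = f"
  shows "hs_norm (\<theta> e - \<theta> f) \<le> 5 * \<delta>"
proof -
  define E where "E = \<theta> e"
  define F where "F = \<theta> f"
  define D where "D = E - F"
  have XE: "hs_norm (E ** E - E) \<le> \<delta>" using approx[of e e] idem[of e] unfolding E_def by simp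
  have XF: "hs_norm (F ** F - F) \<le> \<delta>" using approx[of f f] idem[of f] unfolding F_def by simp
  have R1: "hs_norm (E ** F - F) \<le> \<delta>" using approx[of e f] ef unfolding E_def F_def by simp
  have R2: "hs_norm (F ** E - F) \<le> \<delta>" using approx[of f e] ef unfolding E_def F_def
    by (simp add: mult.commute)
  have XDeq: "D ** D - D = ((E ** E - E) - (E ** F - F)) - ((F ** E - F) - (F ** F - F))"
    unfolding D_def by (simp add: vec_eq_iff mult_ent algebra_simps)
  have XD: "hs_norm (D ** D - D) \<le> 4 * \<delta>"
  proof -
    have "hs_norm (D ** D - D) \<le> hs_norm ((E ** E - E) - (E ** F - F)) + hs_norm ((F ** E - F) - (F ** F - F))"
      unfolding XDeq by (rule hs_tri_diff)
    also have "\<dots> \<le> (hs_norm (E ** E - E) + hs_norm (E ** F - F)) + (hs_norm (F ** E - F) + hs_norm (F ** F - F))"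
      by (intro add_mono hs_tri_diff)
    finally show ?thesis using XE XF R1 R2 by linarith
  qed
  have eE: "cmod (mtrace E - 1) < 0.95" using e_in unfolding Sk_def E_def by simp
  have fF: "cmod (mtrace F - 1) < 0.95" using f_in unfolding Sk_def F_def by simp
  have uE: "cmod (mtrace E - 1) \<le> 1.5 * \<delta>" by (rule trace_near[OF XE eE delta_nonneg delta_small])
  have uF: "cmod (mtrace F - 1) \<le> 1.5 * \<delta>" by (rule trace_near[OF XF fF delta_nonneg delta_small])
  have tDeq: "mtrace D = (mtrace E - 1) - (mtrace F - 1)" unfolding D_def tr_ent by simp
  have "cmod (mtrace D) \<le> cmod (mtrace E - 1) + cmod (mtrace F - 1)"
    unfolding tDeq by (rule norm_triangle_ineq4)
  then have tD: "cmod (mtrace D) \<le> 3 * \<delta>" using uE uF by linarith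
  have tau1: "cmod (mtrace (D ** D - D)) \<le> 6 * \<delta>" using tr_bound[of "D ** D - D"] XD by linarith
  have "(hs_norm (D ** D - D))\<^sup>2 \<le> (4 * \<delta>)\<^sup>2" using XD hs_nonneg[of "D ** D - D"] by (intro power_mono) auto
  then have xi1: "cmod (det2 (D ** D - D)) \<le> 8 * \<delta>\<^sup>2" using det_bound[of "D ** D - D"]
    by (simp add: power_mult_distrib)
  have B: "cmod (det2 D) \<le> 0.32 * \<delta>" "cmod (mtrace D - 1) \<ge> 0.91"
    using scalarB[OF tD tau1 P2 P3 xi1 delta_nonneg delta_small] by auto
  have "cmod (mtrace D - 1) * hs_norm D = hs_norm (\<chi> i j. (mtrace D - 1) * D$i$j)"
    by (rule hs_scale[symmetric])
  also have "\<dots> = hs_norm ((D ** D - D) + (\<chi> i j. if i = j then det2 D else 0))" unfolding P4 ..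
  also have "\<dots> \<le> hs_norm (D ** D - D) + hs_norm ((\<chi> i j. if i = j then det2 D else 0)::complex^2^2)"
    by (rule hs_tri)
  also have "\<dots> \<le> 4 * \<delta> + 1.5 * (0.32 * \<delta>)"
    using XD hs_diag[of "det2 D"] B(1) by linarith
  finally have fin: "cmod (mtrace D - 1) * hs_norm D \<le> 4 * \<delta> + 1.5 * (0.32 * \<delta>)" .
  have "0.91 * hs_norm D \<le> cmod (mtrace D - 1) * hs_norm D"
    using B(2) hs_nonneg[of D] by (intro mult_right_mono) auto
  then have "91/100 * hs_norm D \<le> 448/100 * \<delta>" using fin by simp
  then have "hs_norm D \<le> 5 * \<delta>" using delta_nonneg by linarith
  then show ?thesis unfolding D_def E_def F_def .
qed

end
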